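(* Assume vertex labels take values in $\{0,1\}^\ell$. Let $k\ge1$, let $\Omega$ be any collection of functions, let $\varphi\in\mathsf{TL}_k(\Omega)$ with free variables among $x_1,\dots,x_k$, and let $c\in\mathbb R$. Then there is a formula $\tilde\varphi^c$ of $\mathsf C^k_{\infty\omega}$, of quantifier rank at most the summation depth of $\varphi$, such that for every graph $G$ and every $\mathbf v\in V_G^k$: $[\![\varphi]\!]^{\mathbf v}_G=c$ if and only if $\tilde\varphi^c$ is true in $G$ under $x_i\mapsto v_i$. Moreover, if $\varphi\in\mathsf{GTL}_2(\Omega)$ then $\tilde\varphi^c$ can be taken in $\mathsf{GC}_{\infty\omega}$.
   Context: Fix integers $n\ge1$, $\ell\ge1$. A graph is $G=(V_G,E_G,\mathrm{col}_G)$ with $V_G=[n]$, $E_G$ a set of unordered pairs of distinct vertices, and $\mathrm{col}_G:V_G\to\{0,1\}^\ell$. Tensor language: $\Omega$ a collection of functions $f:\mathbb R^p\to\mathbb R$. Expressions $\varphi::=\mathbf 1_{x=y}\mid \mathbf 1_{x\neq y}\mid E(x,y)\mid P_s(x)\mid \varphi\cdot\varphi\mid \varphi+\varphi\mid a\cdot\varphi\mid f(\varphi_1,\dots,\varphi_p)\mid \sum_x\varphi$, usual free variables ($\sum_x$ binds $x$); semantics: $E$ adjacency indicator, $P_s(x)=\mathrm{col}_G(\nu(x))_s$, $\mathbf 1_{x\,\mathrm{op}\,y}$ the (dis)equality indicator, $\cdot,+,a\cdot,f$ pointwise, $[\![\sum_x\varphi]\!]^\nu_G=\sum_{v\in V_G}[\![\varphi]\!]^{\nu[x\mapsto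 v]}_G$. Summation depth: $0$ for atoms, max for $\cdot,+,f(\dots)$, unchanged by $a\cdot$, $+1$ for $\sum_x$. $\mathsf{TL}_k(\Omega)$: expressions using only variables $x_1,\dots,x_k$ (re-binding allowed). Guarded fragment $\mathsf{GTL}_2(\Omega)$: expressions with exactly one free variable ($x_1$ or $x_2$), built from $\mathbf 1_{x_i=x_i}$, $\mathbf 1_{x_i\ne x_i}$, $P_s(x_i)$ by $\cdot$, $+$ of expressions with the same single free variable, $a\cdot$, $f(\varphi_1,\dots,\varphi_p)$ with all $\varphi_j$ sharing the same single free variable, and $\sum_{x_j}(E(x_i,x_j)\cdot\varphi)$ with $\{i,j\}=\{1,2\}$, $\varphi$ with free variable $x_j$. Infinitary counting logic $\mathsf C^k_{\infty\omega}$: formulas over variables $x_1,\dots,x_k$ given by $\varphi::=(x_i=x_j)\mid E(x_i,x_j)\mid P_s(x_i)\mid\neg\varphi\mid\varphi\wedge\varphi\mid\exists^{\ge m}x_i\,\varphi\mid\bigvee_{\alpha\in A}\varphi_\alpha\mid\bigwedge_{\alpha\in A}\varphi_\alpha$ with arbitrary (possibly uncountable) index sets $A$. Truth under a valuation $\mu$: $(x_i=x_j)$ iff $\mu(x_i)=\mu(x_j)$; $E(x_i,x_j)$ iff $\mu(x_i)\mu(x_j)\in E_G$; $P_s(x_i)$ iff $\mathrm{col}_G(\mu(x_i))_s=1$; $\exists^{\ge m}x_i\varphi$ iff at least $m$ vertices $v$ satisfy $\varphi$ under $\mu[x_i\mapsto v]$; infinitary $\bigvee$/$\bigwedge$ as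 some/all. Quantifier rank: nesting depth of counting quantifiers (supremum over infinitary connectives). The guarded fragment $\mathsf{GC}_{\infty\omega}$ (over $x_1,x_2$): equality atoms only of the form $x_i=x_i$; components of $\wedge$, $\bigvee$, $\bigwedge$ have the same single free variable; counting quantifiers only in the forms $\exists^{\ge m}x_2(E(x_1,x_2)\wedge\varphi(x_2))$ or $\exists^{\ge m}x_1(E(x_2,x_1)\wedge\varphi(x_1))$. *)

theory Defs
  imports Main "HOL-Library.Extended_Nat"
begin

text \<open>A graph is given by an edge set E of unordered pairs
(2-element subsets of [n]) and a colouring col, where col v s is the s-th bit
(s in {1..l}) of the label of vertex v in {0,1}^l.\<close>

definition is_graph :: "nat \<Rightarrow> nat set set \<Rightarrow> bool" where
  "is_graph n E \<longleftrightarrow> (\<forall>e\<in>E. \<exists>u v. e = {u, v} \<and> u \<in> {1..n} \<and> v \<in> {1..n} \<and> u \<noteq> v)"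

text \<open>A function f : R^p -> R from Omega is represented by the pair (p, f) with
f :: real list => real (only its values on lists of length p matter).\<close>

datatype tl =
    TEq nat nat
  | TNeq nat nat
  | TE nat nat
  | TP nat nat               \<comment> \<open>P_s(x_i): TP s i\<close>
  | TMul tl tl
  | TAdd tl tl
  | TScal real tl
  | TApp "nat \<times> (real list \<Rightarrow> real)" "tl list"
  | TSum nat tl

primrec tl_sem :: "nat \<Rightarrow> nat set set \<Rightarrow> (nat \<Rightarrow> nat \<Rightarrow> bool) \<Rightarrow> (nat \<Rightarrow> nat) \<Rightarrow> tl \<Rightarrow> real" where
  "tl_sem n E col \<nu> (TEq i j) = (if \<nu> i = \<nu> j then 1 else 0)"
| "tl_sem n E col \<nu> (TNeq i j) = (if \<nu> i \<noteq> \<nu> j then 1 else 0)"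
| "tl_sem n E col \<nu> (TE i j) = (if {\<nu> i, \<nu> j} \<in> E then 1 else 0)"
| "tl_sem n E col \<nu> (TP s i) = (if col (\<nu> i) s then 1 else 0)"
| "tl_sem n E col \<nu> (TMul a b) = tl_sem n E col \<nu> a * tl_sem n E col \<nu> b"
| "tl_sem n E col \<nu> (TAdd a b) = tl_sem n E col \<nu> a + tl_sem n E col \<nu> b"
| "tl_sem n E col \<nu> (TScal r a) = r * tl_sem n E col \<nu> a"
| "tl_sem n E col \<nu> (TApp f args) = snd f (map (tl_sem n E col \<nu>) args)"
| "tl_sem n E col \<nu> (TSum i a) = (\<Sum>v\<in>{1..n}. tl_sem n E col (\<nu>(i := v)) a)"

primrec sdepth :: "tl \<Rightarrow> nat" where
  "sdepth (TEq i j) = 0"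
| "sdepth (TNeq i j) = 0"
| "sdepth (TE i j) = 0"
| "sdepth (TP s i) = 0"
| "sdepth (TMul a b) = max (sdepth a) (sdepth b)"
| "sdepth (TAdd a b) = max (sdepth a) (sdepth b)"
| "sdepth (TScal r a) = sdepth a"
| "sdepth (TApp f args) = fold max (map sdepth args) 0"
| "sdepth (TSum i a) = Suc (sdepth a)"

primrec in_TL :: "nat \<Rightarrow> nat \<Rightarrow> (nat \<times> (real list \<Rightarrow> real)) set \<Rightarrow> tl \<Rightarrow> bool" where
  "in_TL l k \<Omega> (TEq i j) \<longleftrightarrow> i \<in> {1..k} \<and> j \<in> {1..k}"
| "in_TL l k \<Omega> (TNeq i j) \<longleftrightarrow> i \<in> {1..k} \<and> j \<in> {1..k}"
| "in_TL l k \<Omega> (TE i j) \<longleftrightarrow> i \<in> {1..k} \<and> j \<in> {1..k}"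
| "in_TL l k \<Omega> (TP s i) \<longleftrightarrow> s \<in> {1..l} \<and> i \<in> {1..k}"
| "in_TL l k \<Omega> (TMul a b) \<longleftrightarrow> in_TL l k \<Omega> a \<and> in_TL l k \<Omega> b"
| "in_TL l k \<Omega> (TAdd a b) \<longleftrightarrow> in_TL l k \<Omega> a \<and> in_TL l k \<Omega> b"
| "in_TL l k \<Omega> (TScal r a) \<longleftrightarrow> in_TL l k \<Omega> a"
| "in_TL l k \<Omega> (TApp f args) \<longleftrightarrow> f \<in> \<Omega> \<and> length args = fst f \<and> list_all (in_TL l k \<Omega>) args"
| "in_TL l k \<Omega> (TSum i a) \<longleftrightarrow> i \<in> {1..k} \<and> in_TL l k \<Omega> a"

text \<open>Guarded fragment GTL_2(Omega): gtl l Omega i phi means phi is in GTL_2(Omega)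
with single free variable x_i (i in {1,2}).\<close>

inductive gtl :: "nat \<Rightarrow> (nat \<times> (real list \<Rightarrow> real)) set \<Rightarrow> nat \<Rightarrow> tl \<Rightarrow> bool"
  for l :: nat and \<Omega> :: "(nat \<times> (real list \<Rightarrow> real)) set" where
  gtl_eq: "i \<in> {1,2} \<Longrightarrow> gtl l \<Omega> i (TEq i i)"
| gtl_neq: "i \<in> {1,2} \<Longrightarrow> gtl l \<Omega> i (TNeq i i)"
| gtl_P: "i \<in> {1,2} \<Longrightarrow> s \<in> {1..l} \<Longrightarrow> gtl l \<Omega> i (TP s i)"
| gtl_mul: "gtl l \<Omega> i a \<Longrightarrow> gtl l \<Omega> i b \<Longrightarrow> gtl l \<Omega> i (TMul a b)"
| gtl_add: "gtl l \<Omega> i a \<Longrightarrow> gtl l \<Omega> i b \<Longrightarrow> gtl l \<Omega> i (TAdd a b)"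
| gtl_scal: "gtl l \<Omega> i a \<Longrightarrow> gtl l \<Omega> i (TScal r a)"
| gtl_app: "f \<in> \<Omega> \<Longrightarrow> length args = fst f \<Longrightarrow> args \<noteq> [] \<Longrightarrow>
             (\<forall>a\<in>set args. gtl l \<Omega> i a) \<Longrightarrow> gtl l \<Omega> i (TApp f args)"
| gtl_sum: "{i, j} = {1, 2} \<Longrightarrow> gtl l \<Omega> j a \<Longrightarrow> gtl l \<Omega> i (TSum j (TMul (TE i j) a))"

datatype 'i cfml =
    CEq nat nat
  | CE nat nat
  | CP nat nat                        \<comment> \<open>P_s(x_i): CP s i\<close>
  | CNot "'i cfml"
  | CAnd "'i cfml" "'i cfml"
  | CEx nat nat "'i cfml"             \<comment> \<open>CEx m i phi: exists at least m x_i. phi\<close>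
  | CBigOr "'i set" "'i \<Rightarrow> 'i cfml"
  | CBigAnd "'i set" "'i \<Rightarrow> 'i cfml"

primrec holds :: "nat \<Rightarrow> nat set set \<Rightarrow> (nat \<Rightarrow> nat \<Rightarrow> bool) \<Rightarrow> (nat \<Rightarrow> nat) \<Rightarrow> 'i cfml \<Rightarrow> bool" where
  "holds n E col \<mu> (CEq i j) \<longleftrightarrow> \<mu> i = \<mu> j"
| "holds n E col \<mu> (CE i j) \<longleftrightarrow> {\<mu> i, \<mu> j} \<in> E"
| "holds n E col \<mu> (CP s i) \<longleftrightarrow> col (\<mu> i) s"
| "holds n E col \<mu> (CNot a) \<longleftrightarrow> \<not> holds n E col \<mu> a"
| "holds n E col \<mu> (CAnd a b) \<longleftrightarrow> holds n E col \<mu> a \<and> holds n E col \<mu> b"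
| "holds n E col \<mu> (CEx m i a) \<longleftrightarrow> m \<le> card {v \<in> {1..n}. holds n E col (\<mu>(i := v)) a}"
| "holds n E col \<mu> (CBigOr A f) \<longleftrightarrow> (\<exists>x\<in>A. holds n E col \<mu> (f x))"
| "holds n E col \<mu> (CBigAnd A f) \<longleftrightarrow> (\<forall>x\<in>A. holds n E col \<mu> (f x))"

primrec qrank :: "'i cfml \<Rightarrow> enat" where
  "qrank (CEq i j) = 0"
| "qrank (CE i j) = 0"
| "qrank (CP s i) = 0"
| "qrank (CNot a) = qrank a"
| "qrank (CAnd a b) = max (qrank a) (qrank b)"
| "qrank (CEx m i a) = eSuc (qrank a)"
| "qrank (CBigOr A f) = (SUP x\<in>A. qrank (f x))"
| "qrank (CBigAnd A f) = (SUP x\<in>A. qrank (f x))"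

primrec in_C :: "nat \<Rightarrow> nat \<Rightarrow> 'i cfml \<Rightarrow> bool" where
  "in_C l k (CEq i j) \<longleftrightarrow> i \<in> {1..k} \<and> j \<in> {1..k}"
| "in_C l k (CE i j) \<longleftrightarrow> i \<in> {1..k} \<and> j \<in> {1..k}"
| "in_C l k (CP s i) \<longleftrightarrow> s \<in> {1..l} \<and> i \<in> {1..k}"
| "in_C l k (CNot a) \<longleftrightarrow> in_C l k a"
| "in_C l k (CAnd a b) \<longleftrightarrow> in_C l k a \<and> in_C l k b"
| "in_C l k (CEx m i a) \<longleftrightarrow> i \<in> {1..k} \<and> in_C l k a"
| "in_C l k (CBigOr A f) \<longleftrightarrow> (\<forall>x\<in>A. in_C l k (f x))"
| "in_C l k (CBigAnd A f) \<longleftrightarrow> (\<forall>x\<in>A. in_C l k (f x))"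

text \<open>Guarded fragment GC_{infinity omega}: gc l i phi means phi is guarded with single free
variable x_i (i in {1,2}).\<close>

inductive gc :: "nat \<Rightarrow> nat \<Rightarrow> 'i cfml \<Rightarrow> bool" for l :: nat where
  gc_eq: "i \<in> {1,2} \<Longrightarrow> gc l i (CEq i i)"
| gc_P: "i \<in> {1,2} \<Longrightarrow> s \<in> {1..l} \<Longrightarrow> gc l i (CP s i)"
| gc_not: "gc l i a \<Longrightarrow> gc l i (CNot a)"
| gc_and: "gc l i a \<Longrightarrow> gc l i b \<Longrightarrow> gc l i (CAnd a b)"
| gc_or: "i \<in> {1,2} \<Longrightarrow> (\<forall>x\<in>A. gc l i (f x)) \<Longrightarrow> gc l i (CBigOr A f)"
| gc_andb: "i \<in> {1,2} \<Longrightarrow> (\<forall>x\<in>A. gc l i (f x)) \<Longrightarrow> gc l i (CBigAnd A f)"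
| gc_ex: "{i, j} = {1, 2} \<Longrightarrow> gc l j a \<Longrightarrow> gc l i (CEx m j (CAnd (CE i j) a))"

end

theory Submission
  imports Defs "HOL-Library.Countable_Set" "HOL-Library.Multiset"
begin


definition bigor :: "'a set \<Rightarrow> ('a \<Rightarrow> nat cfml) \<Rightarrow> nat cfml" where
  "bigor S g = CBigOr {m. from_nat_into S m \<in> S} (\<lambda>m. g (from_nat_into S m))"

lemma holds_bigor: "countable S \<Longrightarrow> holds n E col \<nu> (bigor S g) \<longleftrightarrow> (\<exists>x\<in>S. holds n E col \<nu> (g x))"
  unfolding bigor_def by (auto dest: from_nat_into_surj)

lemma qrank_bigor: "(\<And>x. x\<in>S \<Longrightarrow> qrank (g x) \<le> d) \<Longrightarrow> qrank (bigor S g) \<le> d"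
  unfolding bigor_def by (auto intro: SUP_least)

lemma in_C_bigor: "(\<And>x. x\<in>S \<Longrightarrow> in_C l k (g x)) \<Longrightarrow> in_C l k (bigor S g)"
  unfolding bigor_def by auto

lemma gc_bigor: "i \<in> {1,2} \<Longrightarrow> (\<And>x. x\<in>S \<Longrightarrow> gc l i (g x)) \<Longrightarrow> gc l i (bigor S g)"
  unfolding bigor_def by (auto intro!: gc_or)

definition exact :: "nat \<Rightarrow> nat \<Rightarrow> nat cfml \<Rightarrow> nat cfml" where
  "exact m j \<phi> = CAnd (CEx m j \<phi>) (CNot (CEx (Suc m) j \<phi>))"

lemma holds_exact: "holds n E col \<nu> (exact m j \<phi>) \<longleftrightarrow> card {v \<in> {1..n}. holds n E col (\<nu>(j := v)) \<phi>} = m"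
  unfolding exact_def by auto

definition sumF :: "(real \<Rightarrow> nat cfml) \<Rightarrow> (nat cfml \<Rightarrow> nat cfml) \<Rightarrow> nat \<Rightarrow> real set \<Rightarrow> real \<Rightarrow> nat cfml" where
  "sumF T G j W c = bigor {xs \<in> lists W. sum_list xs = c}
     (\<lambda>xs. CAnd (CBigAnd {..<length xs} (\<lambda>p. exact (count_list xs (xs!p)) j (G (T (xs!p)))))
                (CNot (CEx (Suc (length xs)) j (G (CEq j j)))))"

lemma mset_eq_sub_size: "A \<subseteq># B \<Longrightarrow> size B \<le> size A \<Longrightarrow> A = (B::'a multiset)"
proof -
  assume a: "A \<subseteq># B" "size B \<le> size A"
  from a(1) obtain C where C: "B = A + C" by (auto simp: mset_subset_eq_exists_conv)
  then have "size C = 0" using a(2) by simp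
  then show ?thesis using C by simp
qed

lemma count_img: "finite N \<Longrightarrow> count (image_mset f (mset_set N)) y = card {u\<in>N. f u = y}"
  by (simp add: count_image_mset' conj_commute eq_commute)

lemma sum_char:
  fixes val :: "nat \<Rightarrow> real"
  assumes fin: "finite N" and W: "\<forall>u\<in>N. val u \<in> W"
  shows "(\<exists>xs\<in>lists W. sum_list xs = c \<and> (\<forall>p<length xs. card {u\<in>N. val u = xs!p} = count_list xs (xs!p))
            \<and> card N \<le> length xs) \<longleftrightarrow> sum val N = c"
proof
  assume "\<exists>xs\<in>lists W. sum_list xs = c \<and> (\<forall>p<length xs. card {u\<in>N. val u = xs!p} = count_list xs (xs!p))
            \<and> card N \<le> length xs"
  then obtain xs where xs: "sum_list xs = c" "\<forall>p<length xs. card {u\<in>N. val u = xs!p} = count_list xs (xs!p)"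
     "card N \<le> length xs" by blast
  define M where "M = image_mset val (mset_set N)"
  have "mset xs \<subseteq># M"
  proof (rule mset_subset_eqI)
    fix y show "count (mset xs) y \<le> count M y"
    proof (cases "y \<in> set xs")
      case True
      then obtain p where "p < length xs" "xs!p = y" by (auto simp: in_set_conv_nth)
      then show ?thesis using xs(2) fin by (auto simp: M_def count_img count_mset)
    next
      case False then show ?thesis by (simp add: count_mset count_list_0_iff)
    qed
  qed
  moreover have "size M \<le> size (mset xs)" using xs(3) fin by (simp add: M_def)
  ultimately have "mset xs = M" by (rule mset_eq_sub_size)
  then have "sum_list xs = sum_mset M" by (metis sum_mset_sum_list)
  then show "sum val N = c" using xs(1) by (simp add: M_def sum_unfold_sum_mset)
next
  assume s: "sum val N = c"
  define M where "M = image_mset val (mset_set N)"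
  obtain xs where xs: "mset xs = M" using ex_mset by blast
  have "set xs \<subseteq> W" using W fin by (metis xs M_def set_mset_mset finite_set_mset_mset_set image_subsetI
     imageE multiset.set_map)
  moreover have "sum_list xs = c" using s xs by (metis M_def sum_mset_sum_list sum_unfold_sum_mset)
  moreover have "\<forall>p<length xs. card {u\<in>N. val u = xs!p} = count_list xs (xs!p)"
    using xs fin by (simp add: M_def count_img flip: count_mset)
  moreover have "card N \<le> length xs" using xs fin by (metis M_def size_mset size_image_mset size_mset_set order_refl)
  ultimately show "\<exists>xs\<in>lists W. sum_list xs = c \<and> (\<forall>p<length xs. card {u\<in>N. val u = xs!p} = count_list xs (xs!p))
            \<and> card N \<le> length xs" by blast
qed

lemma holds_sumF:
  fixes val :: "nat \<Rightarrow> real"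
  assumes cW: "countable W" and W: "\<forall>u\<in>{1..n}. g u \<longrightarrow> val u \<in> W"
    and T: "\<And>u y. holds n E col (\<nu>(j:=u)) (T y) \<longleftrightarrow> val u = y"
    and G: "\<And>u \<phi>. holds n E col (\<nu>(j:=u)) (G \<phi>) \<longleftrightarrow> g u \<and> holds n E col (\<nu>(j:=u)) \<phi>"
  shows "holds n E col \<nu> (sumF T G j W c) \<longleftrightarrow> (\<Sum>u\<in>{1..n}. if g u then val u else 0) = c"
proof -
  define N where "N = {u\<in>{1..n}. g u}"
  have cl: "countable {xs \<in> lists W. sum_list xs = c}" using countable_lists[OF cW] by (rule countable_subset[rotated]) auto
  have "(\<Sum>u\<in>{1..n}. if g u then val u else 0) = sum val N"
    unfolding N_def by (simp add: sum.inter_filter[symmetric])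
  moreover have "holds n E col \<nu> (sumF T G j W c) \<longleftrightarrow>
    (\<exists>xs\<in>lists W. sum_list xs = c \<and> (\<forall>p<length xs. card {u\<in>N. val u = xs!p} = count_list xs (xs!p))
            \<and> card N \<le> length xs)"
    unfolding sumF_def holds_bigor[OF cl]
    by (simp add: holds_exact G T N_def not_less_eq_eq conj_ac Bex_def Ball_def)
  moreover have "\<dots> \<longleftrightarrow> sum val N = c"
    by (rule sum_char) (auto simp: N_def W)
  ultimately show ?thesis by simp
qed

lemma qrank_sumF: "(\<And>y. qrank (T y) \<le> enat d) \<Longrightarrow> (\<And>\<phi>. qrank (G \<phi>) = qrank \<phi>)
   \<Longrightarrow> qrank (sumF T G j W c) \<le> enat (Suc d)"
  unfolding sumF_def exact_def
  by (intro qrank_bigor) (auto intro!: SUP_least simp: eSuc_enat[symmetric] zero_enat_def[symmetric])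

lemma in_C_sumF: "(\<And>y. in_C l k (T y)) \<Longrightarrow> (\<And>\<phi>. in_C l k \<phi> \<Longrightarrow> in_C l k (G \<phi>)) \<Longrightarrow> j \<in> {1..k}
   \<Longrightarrow> in_C l k (sumF T G j W c)"
  unfolding sumF_def exact_def
  by (intro in_C_bigor) auto

lemma in_listset: "xs \<in> listset As \<longleftrightarrow> length xs = length As \<and> (\<forall>p<length As. xs!p \<in> As!p)"
proof (induction As arbitrary: xs)
  case Nil then show ?case by auto
next
  case (Cons A As)
  show ?case
  proof (cases xs)
    case Nil then show ?thesis by (auto simp: set_Cons_def)
  next
    case (Cons y ys)
    then show ?thesis using Cons.IH by (auto simp: set_Cons_def nth_Cons split: nat.splits)
  qed
qed

primrec V :: "tl \<Rightarrow> real set" where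
  "V (TEq i j) = {0,1}"
| "V (TNeq i j) = {0,1}"
| "V (TE i j) = {0,1}"
| "V (TP s i) = {0,1}"
| "V (TMul a b) = (\<lambda>(x,y). x*y) ` (V a \<times> V b)"
| "V (TAdd a b) = (\<lambda>(x,y). x+y) ` (V a \<times> V b)"
| "V (TScal r a) = (\<lambda>x. r*x) ` V a"
| "V (TApp f args) = snd f ` listset (map V args)"
| "V (TSum i a) = sum_list ` lists (V a)"

lemma countable_V: "countable (V \<phi>)"
proof (induction \<phi>)
  case (TApp f args)
  have "listset (map V args) \<subseteq> lists (\<Union>a\<in>set args. V a)"
    by (force simp: in_listset in_set_conv_nth)
  moreover have "countable (lists (\<Union>a\<in>set args. V a))" using TApp by (intro countable_lists countable_UN) (auto intro: countable_finite)
  ultimately show ?case by (auto intro: countable_subset)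
qed auto

lemma countable_listset: "countable (listset (map V args))"
proof -
  have "listset (map V args) \<subseteq> lists (\<Union>a\<in>set args. V a)"
    by (force simp: in_listset in_set_conv_nth)
  moreover have "countable (lists (\<Union>a\<in>set args. V a))" using countable_V by (intro countable_lists countable_UN) (auto intro: countable_finite)
  ultimately show ?thesis by (auto intro: countable_subset)
qed

lemma sem_in_V: "tl_sem n E col \<nu> \<phi> \<in> V \<phi>"
proof (induction \<phi> arbitrary: \<nu>)
  case (TApp f args)
  then show ?case by (auto simp: in_listset)
next
  case (TSum i a)
  have "tl_sem n E col \<nu> (TSum i a) = sum_list (map (\<lambda>v. tl_sem n E col (\<nu>(i := v)) a) [1..<Suc n])"
  proof -
    have "{1..n} = set [1..<Suc n]" by auto
    then show ?thesis by (simp add: sum_list_distinct_conv_sum_set)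
  qed
  moreover have "map (\<lambda>v. tl_sem n E col (\<nu>(i := v)) a) [1..<Suc n] \<in> lists (V a)" using TSum by auto
  ultimately show ?case by (metis V.simps(9) imageI)
qed auto

fun tr :: "tl \<Rightarrow> real \<Rightarrow> nat cfml" where
  "tr (TEq i j) c = (if c = 1 then CEq i j else if c = 0 then CNot (CEq i j) else CNot (CEq i i))"
| "tr (TNeq i j) c = (if c = 1 then CNot (CEq i j) else if c = 0 then CEq i j else CNot (CEq i i))"
| "tr (TE i j) c = (if c = 1 then CE i j else if c = 0 then CNot (CE i j) else CNot (CEq i i))"
| "tr (TP s i) c = (if c = 1 then CP s i else if c = 0 then CNot (CP s i) else CNot (CEq i i))"
| "tr (TMul a b) c = bigor {(x,y). x \<in> V a \<and> y \<in> V b \<and> x*y = c} (\<lambda>(x,y). CAnd (tr a x) (tr b y))"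
| "tr (TAdd a b) c = bigor {(x,y). x \<in> V a \<and> y \<in> V b \<and> x+y = c} (\<lambda>(x,y). CAnd (tr a x) (tr b y))"
| "tr (TScal r a) c = bigor {x \<in> V a. r*x = c} (tr a)"
| "tr (TApp f args) c = bigor {xs \<in> listset (map V args). snd f xs = c}
      (\<lambda>xs. CBigAnd {..<length args} (\<lambda>p. (map tr args ! p) (xs!p)))"
| "tr (TSum j b) c = (case b of TMul x a \<Rightarrow> (case x of TE i i' \<Rightarrow> sumF (tr a) (CAnd (CE i i')) j (V a) c
        | _ \<Rightarrow> sumF (tr b) id j (V b) c) | _ \<Rightarrow> sumF (tr b) id j (V b) c)"


lemma tr_TSum_cases:
  "(\<exists>i i' a. b = TMul (TE i i') a \<and> tr (TSum j b) c = sumF (tr a) (CAnd (CE i i')) j (V a) c)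
   \<or> ((\<nexists>i i' a. b = TMul (TE i i') a) \<and> tr (TSum j b) c = sumF (tr b) id j (V b) c)"
  by (cases b) (auto split: tl.splits)

lemma size_args: "a \<in> set args \<Longrightarrow> size a < size (TApp f args)"
  by (induction args) auto

lemma tr_correct: "tl_sem n E col \<nu> \<phi> = c \<longleftrightarrow> holds n E col \<nu> (tr \<phi> c)"
proof (induction \<phi> arbitrary: c \<nu> rule: measure_induct_rule[where f=size])
  case (less \<phi>)
  show ?case
  proof (cases \<phi>)
    case (TMul a b)
    have IHa: "\<And>c \<nu>. tl_sem n E col \<nu> a = c \<longleftrightarrow> holds n E col \<nu> (tr a c)" using less TMul by auto
    have IHb: "\<And>c \<nu>. tl_sem n E col \<nu> b = c \<longleftrightarrow> holds n E col \<nu> (tr b c)" using less TMul by auto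
    have cnt: "countable {(x,y). x \<in> V a \<and> y \<in> V b \<and> x*y = c}"
      by (rule countable_subset[of _ "V a \<times> V b"]) (auto simp: countable_V)
    show ?thesis unfolding TMul tr.simps holds_bigor[OF cnt]
      by (auto simp: IHa[symmetric] IHb[symmetric] sem_in_V)
  next
    case (TAdd a b)
    have IHa: "\<And>c \<nu>. tl_sem n E col \<nu> a = c \<longleftrightarrow> holds n E col \<nu> (tr a c)" using less TAdd by auto
    have IHb: "\<And>c \<nu>. tl_sem n E col \<nu> b = c \<longleftrightarrow> holds n E col \<nu> (tr b c)" using less TAdd by auto
    have cnt: "countable {(x,y). x \<in> V a \<and> y \<in> V b \<and> x+y = c}"
      by (rule countable_subset[of _ "V a \<times> V b"]) (auto simp: countable_V)
    show ?thesis unfolding TAdd tr.simps holds_bigor[OF cnt]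
      by (auto simp: IHa[symmetric] IHb[symmetric] sem_in_V)
  next
    case (TScal r a)
    have IHa: "\<And>c \<nu>. tl_sem n E col \<nu> a = c \<longleftrightarrow> holds n E col \<nu> (tr a c)" using less TScal by auto
    have cnt: "countable {x \<in> V a. r*x = c}"
      by (rule countable_subset[of _ "V a"]) (auto simp: countable_V)
    show ?thesis unfolding TScal tr.simps holds_bigor[OF cnt]
      by (auto simp: IHa[symmetric] sem_in_V)
  next
    case (TApp f args)
    have IH: "\<And>p c \<nu>. p < length args \<Longrightarrow> tl_sem n E col \<nu> (args!p) = c \<longleftrightarrow> holds n E col \<nu> (tr (args!p) c)"
      using less TApp size_args nth_mem by blast
    have cnt: "countable {xs \<in> listset (map V args). snd f xs = c}"
      by (rule countable_subset[of _ "listset (map V args)"]) (auto simp: countable_listset)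
    have "holds n E col \<nu> (tr \<phi> c) \<longleftrightarrow> (\<exists>xs \<in> listset (map V args). snd f xs = c \<and>
        (\<forall>p<length args. tl_sem n E col \<nu> (args!p) = xs!p))"
      unfolding TApp tr.simps holds_bigor[OF cnt] using IH by auto
    also have "\<dots> \<longleftrightarrow> snd f (map (tl_sem n E col \<nu>) args) = c"
    proof
      assume "\<exists>xs \<in> listset (map V args). snd f xs = c \<and> (\<forall>p<length args. tl_sem n E col \<nu> (args!p) = xs!p)"
      then obtain xs where xs: "xs \<in> listset (map V args)" "snd f xs = c"
        "\<forall>p<length args. tl_sem n E col \<nu> (args!p) = xs!p" by blast
      have "map (tl_sem n E col \<nu>) args = xs"
        using xs(1,3) by (intro nth_equalityI) (auto simp: in_listset)
      then show "snd f (map (tl_sem n E col \<nu>) args) = c" using xs(2) by simp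
    next
      assume "snd f (map (tl_sem n E col \<nu>) args) = c"
      moreover have "map (tl_sem n E col \<nu>) args \<in> listset (map V args)"
        by (auto simp: in_listset sem_in_V)
      ultimately show "\<exists>xs \<in> listset (map V args). snd f xs = c \<and> (\<forall>p<length args. tl_sem n E col \<nu> (args!p) = xs!p)"
        by force
    qed
    finally show ?thesis unfolding TApp by simp
  next
    case (TSum j b)
    from tr_TSum_cases[of b j c] show ?thesis
    proof
      assume "\<exists>i i' a. b = TMul (TE i i') a \<and> tr (TSum j b) c = sumF (tr a) (CAnd (CE i i')) j (V a) c"
      then obtain i i' a where b: "b = TMul (TE i i') a" and t: "tr (TSum j b) c = sumF (tr a) (CAnd (CE i i')) j (V a) c"
        by blast
      have IHa: "\<And>c \<nu>. tl_sem n E col \<nu> a = c \<longleftrightarrow> holds n E col \<nu> (tr a c)" using less TSum b by auto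
      have "holds n E col \<nu> (tr \<phi> c) \<longleftrightarrow>
        (\<Sum>u\<in>{1..n}. if {(\<nu>(j:=u)) i, (\<nu>(j:=u)) i'} \<in> E then tl_sem n E col (\<nu>(j:=u)) a else 0) = c"
        unfolding TSum t
        by (rule holds_sumF) (auto simp: countable_V sem_in_V IHa[symmetric])
      moreover have "tl_sem n E col \<nu> \<phi> = (\<Sum>u\<in>{1..n}. if {(\<nu>(j:=u)) i, (\<nu>(j:=u)) i'} \<in> E then tl_sem n E col (\<nu>(j:=u)) a else 0)"
        unfolding TSum b by (auto intro!: sum.cong)
      ultimately show ?thesis by simp
    next
      assume "(\<nexists>i i' a. b = TMul (TE i i') a) \<and> tr (TSum j b) c = sumF (tr b) id j (V b) c"
      then have t: "tr (TSum j b) c = sumF (tr b) id j (V b) c" by blast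
      have IHb: "\<And>c \<nu>. tl_sem n E col \<nu> b = c \<longleftrightarrow> holds n E col \<nu> (tr b c)" using less TSum by auto
      have "holds n E col \<nu> (tr \<phi> c) \<longleftrightarrow>
        (\<Sum>u\<in>{1..n}. if True then tl_sem n E col (\<nu>(j:=u)) b else 0) = c"
        unfolding TSum t
        by (rule holds_sumF) (auto simp: countable_V sem_in_V IHb[symmetric])
      then show ?thesis unfolding TSum by simp
    qed
  qed auto
qed

lemma fold_max_ge1: "m \<le> fold max xs (m::nat)"
  by (induction xs arbitrary: m) (auto intro: order_trans[OF max.cobounded2])

lemma fold_max_ge: "x \<in> set xs \<Longrightarrow> x \<le> fold max xs (m::nat)"
  by (induction xs arbitrary: m) (auto intro: order_trans[OF max.cobounded1 fold_max_ge1])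

lemma qrank_tr: "qrank (tr \<phi> c) \<le> enat (sdepth \<phi>)"
proof (induction \<phi> arbitrary: c rule: measure_induct_rule[where f=size])
  case (less \<phi>)
  show ?case
  proof (cases \<phi>)
    case (TMul a b)
    have A: "\<And>c. qrank (tr a c) \<le> enat (sdepth a)" "\<And>c. qrank (tr b c) \<le> enat (sdepth b)"
      using less TMul by auto
    have "\<And>c. qrank (tr a c) \<le> enat (sdepth \<phi>)" "\<And>c. qrank (tr b c) \<le> enat (sdepth \<phi>)"
      by (auto simp: TMul intro: order_trans[OF A(1)] order_trans[OF A(2)])
    then show ?thesis unfolding TMul tr.simps by (intro qrank_bigor) (auto simp: TMul)
  next
    case (TAdd a b)
    have A: "\<And>c. qrank (tr a c) \<le> enat (sdepth a)" "\<And>c. qrank (tr b c) \<le> enat (sdepth b)"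
      using less TAdd by auto
    have "\<And>c. qrank (tr a c) \<le> enat (sdepth \<phi>)" "\<And>c. qrank (tr b c) \<le> enat (sdepth \<phi>)"
      by (auto simp: TAdd intro: order_trans[OF A(1)] order_trans[OF A(2)])
    then show ?thesis unfolding TAdd tr.simps by (intro qrank_bigor) (auto simp: TAdd)
  next
    case (TScal r a)
    then show ?thesis using less by (auto intro!: qrank_bigor)
  next
    case (TApp f args)
    have "\<And>p c. p < length args \<Longrightarrow> qrank (tr (args!p) c) \<le> enat (sdepth \<phi>)"
    proof -
      fix p c assume p: "p < length args"
      have "qrank (tr (args!p) c) \<le> enat (sdepth (args!p))" using less TApp size_args nth_mem p by blast
      also have "\<dots> \<le> enat (sdepth \<phi>)" using p TApp by (auto intro!: fold_max_ge)
      finally show "qrank (tr (args!p) c) \<le> enat (sdepth \<phi>)" .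
    qed
    then show ?thesis unfolding TApp tr.simps by (intro qrank_bigor) (auto intro!: SUP_least simp: TApp)
  next
    case (TSum j b)
    from tr_TSum_cases[of b j c] show ?thesis
    proof
      assume "\<exists>i i' a. b = TMul (TE i i') a \<and> tr (TSum j b) c = sumF (tr a) (CAnd (CE i i')) j (V a) c"
      then obtain i i' a where b: "b = TMul (TE i i') a" and t: "tr (TSum j b) c = sumF (tr a) (CAnd (CE i i')) j (V a) c"
        by blast
      have "\<And>c. qrank (tr a c) \<le> enat (sdepth a)" using less TSum b by auto
      then show ?thesis unfolding TSum t using b by (auto intro!: qrank_sumF simp: max_def)
    next
      assume "(\<nexists>i i' a. b = TMul (TE i i') a) \<and> tr (TSum j b) c = sumF (tr b) id j (V b) c"
      then have t: "tr (TSum j b) c = sumF (tr b) id j (V b) c" by blast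
      have "\<And>c. qrank (tr b c) \<le> enat (sdepth b)" using less TSum by auto
      then show ?thesis unfolding TSum t by (auto intro!: qrank_sumF)
    qed
  qed (auto simp: zero_enat_def)
qed

lemma in_C_tr: "in_TL l k \<Omega> \<phi> \<Longrightarrow> in_C l k (tr \<phi> c)"
proof (induction \<phi> arbitrary: c rule: measure_induct_rule[where f=size])
  case (less \<phi>)
  show ?case
  proof (cases \<phi>)
    case (TMul a b)
    then show ?thesis using less by (auto intro!: in_C_bigor)
  next
    case (TAdd a b)
    then show ?thesis using less by (auto intro!: in_C_bigor)
  next
    case (TScal r a)
    then show ?thesis using less by (auto intro!: in_C_bigor)
  next
    case (TApp f args)
    have "\<And>p c. p < length args \<Longrightarrow> in_C l k (tr (args!p) c)"
      using less TApp size_args nth_mem by (simp add: list_all_iff)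
    then show ?thesis unfolding TApp tr.simps by (intro in_C_bigor) auto
  next
    case (TSum j b)
    from tr_TSum_cases[of b j c] show ?thesis
    proof
      assume "\<exists>i i' a. b = TMul (TE i i') a \<and> tr (TSum j b) c = sumF (tr a) (CAnd (CE i i')) j (V a) c"
      then obtain i i' a where b: "b = TMul (TE i i') a" and t: "tr (TSum j b) c = sumF (tr a) (CAnd (CE i i')) j (V a) c"
        by blast
      have "\<And>c. in_C l k (tr a c)" using less TSum b by auto
      then show ?thesis unfolding TSum t using b less.prems TSum by (auto intro!: in_C_sumF)
    next
      assume "(\<nexists>i i' a. b = TMul (TE i i') a) \<and> tr (TSum j b) c = sumF (tr b) id j (V b) c"
      then have t: "tr (TSum j b) c = sumF (tr b) id j (V b) c" by blast
      have "\<And>c. in_C l k (tr b c)" using less TSum by auto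
      then show ?thesis unfolding TSum t using less.prems TSum by (auto intro!: in_C_sumF)
    qed
  qed (use less.prems in auto)
qed

lemma gtl_var: "gtl l \<Omega> i \<phi> \<Longrightarrow> i \<in> {1,2}"
  by (induction rule: gtl.induct) (force simp: neq_Nil_conv)+

lemma gc_tr: "gtl l \<Omega> i \<phi> \<Longrightarrow> \<forall>c. gc l i (tr \<phi> c)"
proof (induction rule: gtl.induct)
  case (gtl_eq i) then show ?case by (auto intro!: gc.intros)
next
  case (gtl_neq i) then show ?case by (auto intro!: gc.intros)
next
  case (gtl_P i s) then show ?case by (auto intro!: gc.intros)
next
  case (gtl_mul i a b) then show ?case using gtl_var[OF gtl_mul(1)] by (auto intro!: gc_bigor gc.intros)
next
  case (gtl_add i a b) then show ?case using gtl_var[OF gtl_add(1)] by (auto intro!: gc_bigor gc.intros)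
next
  case (gtl_scal i a r) then show ?case using gtl_var[OF gtl_scal(1)] by (auto intro!: gc_bigor gc.intros)
next
  case (gtl_app f args i)
  obtain a where "a \<in> set args" using gtl_app(3) by (cases args) auto
  then have i: "i \<in> {1,2}" using gtl_app(4) gtl_var by blast
  show ?case using gtl_app i by (auto intro!: gc_bigor gc.intros)
next
  case (gtl_sum i j a)
  have ij: "i \<in> {1,2}" "j \<in> {1,2}" using gtl_sum(1) by auto
  show ?case using gtl_sum ij
    by (auto simp: sumF_def exact_def intro!: gc_bigor gc.intros)
qed


theorem mainTheorem14:
  fixes n l k :: nat and \<Omega> :: "(nat \<times> (real list \<Rightarrow> real)) set" and \<phi> :: tl and c :: real
  assumes "n \<ge> 1" and "l \<ge> 1" and "k \<ge> 1" and "in_TL l k \<Omega> \<phi>"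
  shows "(\<exists>\<psi> :: nat cfml. in_C l k \<psi> \<and> qrank \<psi> \<le> enat (sdepth \<phi>) \<and>
            (\<forall>E col v. is_graph n E \<longrightarrow> (\<forall>i\<in>{1..k}. v i \<in> {1..n}) \<longrightarrow>
                (tl_sem n E col v \<phi> = c \<longleftrightarrow> holds n E col v \<psi>)))
       \<and> (\<forall>i. gtl l \<Omega> i \<phi> \<longrightarrow>
            (\<exists>\<psi> :: nat cfml. gc l i \<psi> \<and> in_C l k \<psi> \<and> qrank \<psi> \<le> enat (sdepth \<phi>) \<and>
              (\<forall>E col v. is_graph n E \<longrightarrow> (\<forall>i\<in>{1..k}. v i \<in> {1..n}) \<longrightarrow>
                (tl_sem n E col v \<phi> = c \<longleftrightarrow> holds n E col v \<psi>))))"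
  proof (intro conjI allI impI)
  show "\<exists>\<psi> :: nat cfml. in_C l k \<psi> \<and> qrank \<psi> \<le> enat (sdepth \<phi>) \<and>
            (\<forall>E col v. is_graph n E \<longrightarrow> (\<forall>i\<in>{1..k}. v i \<in> {1..n}) \<longrightarrow>
                (tl_sem n E col v \<phi> = c \<longleftrightarrow> holds n E col v \<psi>))"
  proof (rule exI[of _ "tr \<phi> c"], intro conjI allI impI)
    show "in_C l k (tr \<phi> c)" by (rule in_C_tr[OF assms(4)])
    show "qrank (tr \<phi> c) \<le> enat (sdepth \<phi>)" by (rule qrank_tr)
    fix E col v show "tl_sem n E col v \<phi> = c \<longleftrightarrow> holds n E col v (tr \<phi> c)" by (rule tr_correct)
  qed
next
  fix i assume g: "gtl l \<Omega> i \<phi>"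
  show "\<exists>\<psi> :: nat cfml. gc l i \<psi> \<and> in_C l k \<psi> \<and> qrank \<psi> \<le> enat (sdepth \<phi>) \<and>
              (\<forall>E col v. is_graph n E \<longrightarrow> (\<forall>i\<in>{1..k}. v i \<in> {1..n}) \<longrightarrow>
                (tl_sem n E col v \<phi> = c \<longleftrightarrow> holds n E col v \<psi>))"
  proof (rule exI[of _ "tr \<phi> c"], intro conjI allI impI)
    show "gc l i (tr \<phi> c)" using gc_tr[OF g] by blast
    show "in_C l k (tr \<phi> c)" by (rule in_C_tr[OF assms(4)])
    show "qrank (tr \<phi> c) \<le> enat (sdepth \<phi>)" by (rule qrank_tr)
    fix E col v show "tl_sem n E col v \<phi> = c \<longleftrightarrow> holds n E col v (tr \<phi> c)" by (rule tr_correct)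
  qed
qed

end
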